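(* Let $c\in(0,1)$ and let $\sigma>0$ satisfy $C_{\mathrm{BS}}(\sigma)=c$. For $y>0$ define $$G(y)=d_1^{-1}\!\left(\Phi^{-1}\!\left(\frac{c}{C_{\mathcal D}(y)}\right)\right).$$ If $U\ge\sigma$ (i.e. $U$ is an upper bound of the implied volatility, e.g. $U=U(c)$ for an upper-bound function $U$), then $c/C_{\mathcal D}(U)\in(0,1)$, $G(U)$ is well defined, and $$L_2(c)\le G(U)\le\sigma,\qquad\text{where } L_2(c)=d_1^{-1}(\Phi^{-1}(c)).$$
   Context: Fix $k\ge 0$. Let $\Phi$ and $\phi$ denote the standard normal distribution function and density. For $\sigma>0$ put $d_1(\sigma)=-k/\sigma+\sigma/2$, $d_2(\sigma)=-k/\sigma-\sigma/2$, and $C_{\mathrm{BS}}(\sigma)=\Phi(d_1(\sigma))-e^k\,\Phi(d_2(\sigma))$, a strictly increasing bijection from $(0,\infty)$ onto $(0,1)$; for $c\in(0,1)$ the implied volatility is the unique $\sigma>0$ with $C_{\mathrm{BS}}(\sigma)=c$. The price-to-delta ratio is $C_{\mathcal D}(y)=C_{\mathrm{BS}}(y)/\Phi(d_1(y))$. The function $d_1^{-1}(x)=x+\sqrt{x^2+2k}$ (which equals $2\max(x,0)$ when $k=0$) is the inverse of $d_1$. *)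

theory Defs
  imports "HOL-Probability.Probability"
begin

definition Phi :: "real \<Rightarrow> real" where
  "Phi x = (LBINT t:{..x}. std_normal_density t)"

definition Phi_inv :: "real \<Rightarrow> real" where
  "Phi_inv p = (THE x. Phi x = p)"

definition d1 :: "real \<Rightarrow> real \<Rightarrow> real" where
  "d1 k \<sigma> = - k / \<sigma> + \<sigma> / 2"

definition d2 :: "real \<Rightarrow> real \<Rightarrow> real" where
  "d2 k \<sigma> = - k / \<sigma> - \<sigma> / 2"

definition C_BS :: "real \<Rightarrow> real \<Rightarrow> real" where
  "C_BS k \<sigma> = Phi (d1 k \<sigma>) - exp k * Phi (d2 k \<sigma>)"

definition C_D :: "real \<Rightarrow> real \<Rightarrow> real" where
  "C_D k y = C_BS k y / Phi (d1 k y)"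

definition d1_inv :: "real \<Rightarrow> real \<Rightarrow> real" where
  "d1_inv k x = x + sqrt (x\<^sup>2 + 2 * k)"

definition G :: "real \<Rightarrow> real \<Rightarrow> real \<Rightarrow> real" where
  "G k c y = d1_inv k (Phi_inv (c / C_D k y))"

definition L2 :: "real \<Rightarrow> real \<Rightarrow> real" where
  "L2 k c = d1_inv k (Phi_inv c)"

end

theory Submission
  imports Defs "HOL-Real_Asymp.Real_Asymp"
begin


lemma Phi_cdf: "Phi x = cdf std_normal_distribution x"
proof -
  interpret real_distribution std_normal_distribution by (rule real_dist_normal_dist)
  have "cdf std_normal_distribution x = measure std_normal_distribution {..x}" by (simp add: cdf_def)
  also have "\<dots> = integral\<^sup>L std_normal_distribution (indicator {..x})" by simp
  also have "\<dots> = integral\<^sup>L lborel (\<lambda>t. std_normal_density t *\<^sub>R indicator {..x} t)"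
    by (rule integral_density) auto
  also have "\<dots> = Phi x" unfolding Phi_def set_lebesgue_integral_def by (simp add: mult.commute)
  finally show ?thesis by simp
qed

lemma Phi_top: "(Phi \<longlongrightarrow> 1) at_top"
proof -
  interpret real_distribution std_normal_distribution by (rule real_dist_normal_dist)
  show ?thesis using cdf_lim_at_top_prob by (simp add: Phi_cdf[abs_def])
qed

lemma Phi_bot: "(Phi \<longlongrightarrow> 0) at_bot"
proof -
  interpret real_distribution std_normal_distribution by (rule real_dist_normal_dist)
  show ?thesis using cdf_lim_at_bot by (simp add: Phi_cdf[abs_def])
qed



lemma measure_snd: "A \<in> sets borel \<Longrightarrow> measure std_normal_distribution A = (LBINT t:A. std_normal_density t)"
proof -
  assume A: "A \<in> sets borel"
  interpret real_distribution std_normal_distribution by (rule real_dist_normal_dist)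
  have "measure std_normal_distribution A = integral\<^sup>L std_normal_distribution (indicator A)" using A by simp
  also have "\<dots> = integral\<^sup>L lborel (\<lambda>t. std_normal_density t *\<^sub>R indicator A t)"
    by (rule integral_density) (use A in auto)
  also have "\<dots> = (LBINT t:A. std_normal_density t)" unfolding set_lebesgue_integral_def by (simp add: mult.commute)
  finally show ?thesis .
qed

lemma cont_snd: "continuous_on S std_normal_density"
  unfolding std_normal_density_def by (intro continuous_intros) auto

lemma Phi_diff: assumes "a < x" shows "Phi x - Phi a = integral {a..x} std_normal_density"
proof -
  interpret real_distribution std_normal_distribution by (rule real_dist_normal_dist)
  have "Phi x - Phi a = measure std_normal_distribution {a<..x}"
    unfolding Phi_cdf using cdf_diff_eq[OF assms] .
  also have "\<dots> = (LBINT t:{a<..x}. std_normal_density t)" by (rule measure_snd) auto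
  also have "\<dots> = (LBINT t=a..x. std_normal_density t)" using assms by (simp add: interval_integral_Ioc)
  also have "\<dots> = integral {a..x} std_normal_density"
    using assms by (intro interval_integral_eq_integral borel_integrable_atLeastAtMost' cont_snd) auto
  finally show ?thesis .
qed

lemma Phi_deriv: "(Phi has_real_derivative std_normal_density x) (at x)"
proof -
  let ?a = "x - 1" and ?b = "x + 1"
  have "((\<lambda>u. integral {?a..u} std_normal_density) has_vector_derivative std_normal_density x) (at x within {?a..?b})"
    by (intro integral_has_vector_derivative cont_snd) auto
  hence "((\<lambda>u. integral {?a..u} std_normal_density) has_real_derivative std_normal_density x) (at x)"
    by (simp add: has_real_derivative_iff_has_vector_derivative at_within_Icc_at)
  hence "((\<lambda>u. Phi ?a + integral {?a..u} std_normal_density) has_real_derivative std_normal_density x) (at x)"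
    by (auto intro!: derivative_eq_intros)
  then show ?thesis
  proof (rule has_field_derivative_transform_within_open[where S="{?a<..<?b}"])
    fix u assume "u \<in> {?a<..<?b}" then show "Phi ?a + integral {?a..u} std_normal_density = Phi u"
      using Phi_diff[of ?a u] by auto
  qed auto
qed



abbreviation "phi \<equiv> std_normal_density"

lemma phi_pos: "phi x > 0" by (rule normal_density_pos) simp

lemma phi_deriv: "(phi has_real_derivative (- x * phi x)) (at x)"
  unfolding std_normal_density_def
  by (auto intro!: derivative_eq_intros simp: power2_eq_square field_simps)

lemma Phi_deriv_chain[derivative_intros]:
  "(f has_real_derivative f') (at x within S) \<Longrightarrow> ((\<lambda>x. Phi (f x)) has_real_derivative phi (f x) * f') (at x within S)"
  using DERIV_chain2[OF Phi_deriv] by blast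

lemma phi_deriv_chain[derivative_intros]:
  "(f has_real_derivative f') (at x within S) \<Longrightarrow> ((\<lambda>x. phi (f x)) has_real_derivative (- f x * phi (f x)) * f') (at x within S)"
  using DERIV_chain2[OF phi_deriv] by blast

lemma Phi_cont: "isCont Phi x"
  using Phi_deriv DERIV_isCont by blast

lemma Phi_strict: "a < b \<Longrightarrow> Phi a < Phi b"
  by (rule DERIV_pos_imp_increasing[where f=Phi]) (auto intro: Phi_deriv phi_pos)

lemma Phi_le_iff: "Phi a \<le> Phi b \<longleftrightarrow> a \<le> b"
  using Phi_strict[of a b] Phi_strict[of b a] by (cases a b rule: linorder_cases) auto

lemma Phi_nonneg: "Phi x \<ge> 0"
proof -
  interpret real_distribution std_normal_distribution by (rule real_dist_normal_dist)
  show ?thesis by (simp add: Phi_cdf cdf_nonneg)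
qed

lemma Phi_le1: "Phi x \<le> 1"
proof -
  interpret real_distribution std_normal_distribution by (rule real_dist_normal_dist)
  show ?thesis by (simp add: Phi_cdf cdf_bounded_prob)
qed

lemma Phi_pos: "Phi x > 0"
  using Phi_strict[of "x - 1" x] Phi_nonneg[of "x - 1"] by linarith

lemma Phi_less1: "Phi x < 1"
  using Phi_strict[of x "x + 1"] Phi_le1[of "x + 1"] by linarith

lemma Phi_surj: assumes "0 < p" "p < 1" shows "\<exists>x. Phi x = p"
proof -
  from Phi_bot assms have "eventually (\<lambda>x. Phi x < p) at_bot" by (simp add: order_tendstoD)
  then obtain a where a: "Phi a < p" by (auto simp: eventually_at_bot_linorder)
  from Phi_top assms have "eventually (\<lambda>x. Phi x > p) at_top" by (simp add: order_tendstoD)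
  then obtain b where b: "Phi b > p" using eventually_at_top_linorder by (metis order.refl)
  have ab: "a \<le> b" using a b Phi_le_iff by force
  show ?thesis using IVT[of Phi a p b] a b ab Phi_cont by force
qed

lemma Phi_Phi_inv: assumes "0 < p" "p < 1" shows "Phi (Phi_inv p) = p"
proof -
  from Phi_surj[OF assms] obtain x where x: "Phi x = p" by blast
  have "\<exists>!x. Phi x = p" using x Phi_le_iff by (metis order_antisym order_refl)
  then show ?thesis unfolding Phi_inv_def by (rule theI')
qed

lemma gordon: "Phi x + x * phi x / (1 + x\<^sup>2) \<ge> 0"
proof -
  let ?q = "\<lambda>x. Phi x + x * phi x / (1 + x\<^sup>2)"
  have dq: "(?q has_real_derivative 2 * phi t / (1 + t\<^sup>2)\<^sup>2) (at t)" for t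
  proof -
    have pos: "1 + t\<^sup>2 \<noteq> 0" by (smt (verit) zero_le_power2)
    show ?thesis
      apply (rule derivative_eq_intros refl Phi_deriv phi_deriv | simp add: pos)+
      using pos by (simp add: divide_simps) (simp add: algebra_simps power2_eq_square)
  qed
  have lim: "(?q \<longlongrightarrow> 0) at_bot"
  proof -
    have "((\<lambda>x. x * phi x / (1 + x\<^sup>2)) \<longlongrightarrow> 0) at_bot"
      unfolding std_normal_density_def by real_asymp
    from tendsto_add[OF Phi_bot this] show ?thesis by simp
  qed
  have "eventually (\<lambda>y. ?q y \<le> ?q x) at_bot"
    unfolding eventually_at_bot_linorder
  proof (intro exI allI impI)
    fix y assume "y \<le> x"
    then show "?q y \<le> ?q x"
      by (rule DERIV_nonneg_imp_nondecreasing) (use dq phi_pos in \<open>auto intro!: exI\<close>)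
  qed
  from tendsto_le[OF trivial_limit_at_bot_linorder tendsto_const lim this] show ?thesis .
qed



lemma n_mono: assumes "a \<le> b" shows "a * Phi a / phi a \<le> b * Phi b / phi b"
proof (rule DERIV_nonneg_imp_nondecreasing[OF assms], intro allI impI exI conjI)
  fix x :: real
  have p: "phi x > 0" by (rule phi_pos)
  have p': "phi x \<noteq> 0" using p by simp
  have pos: "1 + x\<^sup>2 > 0" by (smt (verit) zero_le_power2)
  show "((\<lambda>x. x * Phi x / phi x) has_real_derivative ((1 + x\<^sup>2) * Phi x + x * phi x) / phi x) (at x)"
    apply (rule derivative_eq_intros refl Phi_deriv phi_deriv p')+
  proof -
    have "((1 * Phi x + phi x * 1 * x) * phi x - x * Phi x * (- x * phi x * 1)) / (phi x * phi x)
       = (phi x * ((1 + x\<^sup>2) * Phi x + x * phi x)) / (phi x * phi x)"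
      by (simp add: algebra_simps power2_eq_square)
    also have "\<dots> = ((1 + x\<^sup>2) * Phi x + x * phi x) / phi x" using p by simp
    finally show "((1 * Phi x + phi x * 1 * x) * phi x - x * Phi x * (- x * phi x * 1)) / (phi x * phi x)
       = ((1 + x\<^sup>2) * Phi x + x * phi x) / phi x" .
  qed
  have "(1 + x\<^sup>2) * (Phi x + x * phi x / (1 + x\<^sup>2)) \<ge> 0"
    using gordon[of x] pos by simp
  also have "(1 + x\<^sup>2) * (Phi x + x * phi x / (1 + x\<^sup>2)) = (1 + x\<^sup>2) * Phi x + x * phi x"
    using pos by (simp add: field_simps)
  finally show "0 \<le> ((1 + x\<^sup>2) * Phi x + x * phi x) / phi x"
    using p by simp
qed

lemma d2_le_d1: "y > 0 \<Longrightarrow> d2 k y \<le> d1 k y" unfolding d1_def d2_def by simp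

definition Rd :: "real \<Rightarrow> real \<Rightarrow> real" where
 "Rd k y = (phi (d2 k y) * (k / y\<^sup>2 - 1/2) * Phi (d1 k y) - Phi (d2 k y) * (phi (d1 k y) * (k / y\<^sup>2 + 1/2))) / (Phi (d1 k y) * Phi (d1 k y))"

lemma R_deriv:
  assumes y: "y > 0"
  shows "((\<lambda>y. Phi (d2 k y) / Phi (d1 k y)) has_real_derivative Rd k y) (at y)"
proof -
  have d1: "((d1 k) has_real_derivative (k / y\<^sup>2 + 1/2)) (at y)"
    unfolding d1_def[abs_def] using y
    by (auto intro!: derivative_eq_intros simp: power2_eq_square field_simps)
  have d2: "((d2 k) has_real_derivative (k / y\<^sup>2 - 1/2)) (at y)"
    unfolding d2_def[abs_def] using y
    by (auto intro!: derivative_eq_intros simp: power2_eq_square field_simps)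
  have P: "Phi (d1 k y) \<noteq> 0" using Phi_pos by (metis less_irrefl)
  show ?thesis unfolding Rd_def
    using DERIV_divide[OF Phi_deriv_chain[OF d2] Phi_deriv_chain[OF d1] P]
    by (simp add: mult.assoc)
qed

lemma R_deriv_nonpos:
  assumes y: "y > 0"
  shows "Rd k y \<le> 0"
proof -
  define a where "a = d1 k y"
  define b where "b = d2 k y"
  have e1: "k / y\<^sup>2 - 1/2 = - a / y" unfolding a_def d1_def using y by (simp add: field_simps power2_eq_square)
  have e2: "k / y\<^sup>2 + 1/2 = - b / y" unfolding b_def d2_def using y by (simp add: field_simps power2_eq_square)
  have ba: "b \<le> a" unfolding a_def b_def using d2_le_d1[OF y] .
  have pa: "phi a > 0" and pb: "phi b > 0" by (rule phi_pos)+
  have "b * Phi b / phi b \<le> a * Phi a / phi a" by (rule n_mono[OF ba])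
  hence key: "b * Phi b * phi a \<le> a * Phi a * phi b" using pa pb by (simp add: divide_simps)
  have "phi b * (- a / y) * Phi a - Phi b * (phi a * (- b / y)) = (b * Phi b * phi a - a * Phi a * phi b) / y"
    using y by (simp add: field_simps)
  also have "\<dots> \<le> 0" using key y by (simp add: divide_nonpos_pos)
  finally have num: "phi b * (- a / y) * Phi a - Phi b * (phi a * (- b / y)) \<le> 0" .
  have den: "Phi a * Phi a > 0" using Phi_pos by simp
  show ?thesis unfolding Rd_def a_def[symmetric] b_def[symmetric] e1 e2
    using divide_nonpos_pos[OF num den] .
qed

lemma R_mono:
  assumes "0 < s" "s \<le> u"
  shows "Phi (d2 k u) / Phi (d1 k u) \<le> Phi (d2 k s) / Phi (d1 k s)"
proof (rule DERIV_nonpos_imp_nonincreasing[OF assms(2)])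
  fix x assume "s \<le> x" "x \<le> u"
  then have x: "x > 0" using assms by auto
  show "\<exists>y. ((\<lambda>y. Phi (d2 k y) / Phi (d1 k y)) has_real_derivative y) (at x) \<and> y \<le> 0"
    using R_deriv[OF x] R_deriv_nonpos[OF x] by blast
qed

lemma d1_inv_mono:
  assumes "k \<ge> 0" "x \<le> y" shows "d1_inv k x \<le> d1_inv k y"
proof -
  let ?s = "sqrt (y\<^sup>2 + 2 * k)"
  have s0: "?s \<ge> 0" and sy: "?s \<ge> - y"
    using assms by (auto intro!: real_le_rsqrt simp: power2_eq_square)
  have "x\<^sup>2 + 2 * k \<le> (?s + (y - x))\<^sup>2"
  proof -
    have "(?s + (y - x))\<^sup>2 = y\<^sup>2 + 2 * k + 2 * (y - x) * ?s + (y - x)\<^sup>2"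
      using assms by (simp add: power2_eq_square algebra_simps)
    moreover have "(y - x) * ?s \<ge> (y - x) * (- y)" using sy assms by (intro mult_left_mono) auto
    ultimately show ?thesis by (simp add: power2_eq_square algebra_simps)
  qed
  hence "sqrt (x\<^sup>2 + 2 * k) \<le> ?s + (y - x)"
    using s0 assms by (intro real_le_lsqrt) auto
  thus ?thesis unfolding d1_inv_def by simp
qed

lemma d1_inv_d1: assumes "k \<ge> 0" "s > 0" shows "d1_inv k (d1 k s) = s"
proof -
  have "(d1 k s)\<^sup>2 + 2 * k = (k / s + s / 2)\<^sup>2"
    unfolding d1_def using assms by (simp add: power2_eq_square field_simps)
  moreover have "k / s + s / 2 \<ge> 0" using assms by simp
  ultimately show ?thesis unfolding d1_inv_def d1_def by simp
qed



theorem proposition5: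
  fixes k c \<sigma> U :: real
  assumes "k \<ge> 0" and "0 < c" and "c < 1"
    and "\<sigma> > 0" and "C_BS k \<sigma> = c"
    and "U \<ge> \<sigma>"
  shows "0 < c / C_D k U \<and> c / C_D k U < 1 \<and> L2 k c \<le> G k c U \<and> G k c U \<le> \<sigma>"
proof -
  define PU where "PU = Phi (d1 k U)"
  define QU where "QU = Phi (d2 k U)"
  define Ps where "Ps = Phi (d1 k \<sigma>)"
  define Qs where "Qs = Phi (d2 k \<sigma>)"
  have PU: "0 < PU" "PU < 1" unfolding PU_def by (rule Phi_pos, rule Phi_less1)
  have Ps: "0 < Ps" "Ps < 1" unfolding Ps_def by (rule Phi_pos, rule Phi_less1)
  have QU: "0 \<le> QU" unfolding QU_def by (rule Phi_nonneg)
  have R: "QU / PU \<le> Qs / Ps" unfolding PU_def QU_def Ps_def Qs_def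
    by (rule R_mono) (use assms in auto)
  have ek: "exp k > 0" by simp
  have cdef: "c = Ps - exp k * Qs" using assms(5) unfolding C_BS_def Ps_def Qs_def by simp
  define D where "D = C_D k U"
  have D: "D = 1 - exp k * (QU / PU)"
    unfolding D_def C_D_def C_BS_def PU_def[symmetric] QU_def[symmetric] using PU by (simp add: field_simps)
  have D1: "D \<le> 1" using D QU PU ek by simp
  have "c / Ps = 1 - exp k * (Qs / Ps)" using cdef Ps by (simp add: field_simps)
  also have "\<dots> \<le> D" unfolding D using mult_left_mono[OF R less_imp_le[OF ek]] by linarith
  finally have D2: "c / Ps \<le> D" .
  have "c < c / Ps" using Ps assms(2) by (simp add: field_simps)
  with D2 have D3: "c < D" by simp
  have Dpos: "D > 0" using D3 assms by simp
  define r where "r = c / D"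
  have r0: "0 < r" unfolding r_def using Dpos assms by simp
  have r1: "r < 1" unfolding r_def using Dpos D3 by simp
  have rc: "c \<le> r" unfolding r_def using Dpos D1 assms(2) by (simp add: field_simps)
  have rP: "r \<le> Ps" unfolding r_def using Dpos D2 Ps assms(2) by (simp add: field_simps)
  have i1: "Phi_inv c \<le> Phi_inv r"
    using rc Phi_Phi_inv[OF assms(2,3)] Phi_Phi_inv[OF r0 r1] Phi_le_iff by metis
  have i2: "Phi_inv r \<le> d1 k \<sigma>"
    using rP Phi_Phi_inv[OF r0 r1] Phi_le_iff unfolding Ps_def by metis
  have "L2 k c \<le> G k c U" unfolding L2_def G_def D_def[symmetric] r_def[symmetric]
    by (rule d1_inv_mono[OF assms(1) i1])
  moreover have "G k c U \<le> \<sigma>"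
  proof -
    have "G k c U \<le> d1_inv k (d1 k \<sigma>)" unfolding G_def D_def[symmetric] r_def[symmetric]
      by (rule d1_inv_mono[OF assms(1) i2])
    also have "\<dots> = \<sigma>" by (rule d1_inv_d1[OF assms(1,4)])
    finally show ?thesis .
  qed
  ultimately show ?thesis using r0 r1 unfolding r_def D_def by simp
qed


end
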